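(* Let $L$ be a finite set of nests, $\mu>0$, and $\mu_\ell\in(0,\mu]$ for each $\ell\in L$. Let $\sigma_{i\ell}\ge 0$ ($i=1,\dots,n$, $\ell\in L$) satisfy $\sum_{\ell\in L}\sigma_{i\ell}=1$ for each $i$. Define the generalized nested logit generating function \[ G(x)=\sum_{\ell\in L}\left(\sum_{i=1}^n\left(\sigma_{i\ell}\,x^{(i)}\right)^{1/\mu_\ell}\right)^{\mu_\ell/\mu},\qquad x\in\mathbb{R}^n_+, \] and the surplus function $E(u)=\mu\ln G(e^{u})$. Then $E$ is $C$-differentially-consistent with $C=\dfrac{1}{\min_{\ell\in L}\mu_\ell}$, i.e. for all $U\in(-\infty,0)^n$ and all $i=1,\dots,n$, \[ \frac{\partial^2 E(U)}{\partial U^{(i)2}}\le \frac{1}{\min_{\ell\in L}\mu_\ell}\cdot\frac{\partial E(U)}{\partial U^{(i)}}. \]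
   Context: For $u\in\mathbb{R}^n$, $e^{u}$ denotes the componentwise exponential $(e^{u^{(1)}},\dots,e^{u^{(n)}})^T$. $\mathbb{R}^n_+$ is the set of vectors with nonnegative components. A convex function $f$ is called $C$-differentially-consistent (for a constant $C>0$) if $\nabla^2_{ii}f(U)\le C\,\nabla_i f(U)$ for all $U\in(-\infty,0)^n$ and all $i$. *)

theory Defs
  imports "HOL-Analysis.Analysis"
begin

definition vexp :: "real^'n \<Rightarrow> real^'n" where
  "vexp u = (\<chi> i. exp (u $ i))"

definition gnl_G :: "'l set \<Rightarrow> real \<Rightarrow> ('l \<Rightarrow> real) \<Rightarrow> ('n::finite \<Rightarrow> 'l \<Rightarrow> real)
    \<Rightarrow> real^'n \<Rightarrow> real" where
  "gnl_G L \<mu> \<mu>l \<sigma> x =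
     (\<Sum>l\<in>L. (\<Sum>i\<in>UNIV. (\<sigma> i l * x $ i) powr (1 / \<mu>l l)) powr (\<mu>l l / \<mu>))"

definition gnl_E :: "'l set \<Rightarrow> real \<Rightarrow> ('l \<Rightarrow> real) \<Rightarrow> ('n::finite \<Rightarrow> 'l \<Rightarrow> real)
    \<Rightarrow> real^'n \<Rightarrow> real" where
  "gnl_E L \<mu> \<mu>l \<sigma> u = \<mu> * ln (gnl_G L \<mu> \<mu>l \<sigma> (vexp u))"

definition partial :: "'n::finite \<Rightarrow> (real^'n \<Rightarrow> real) \<Rightarrow> real^'n \<Rightarrow> real" where
  "partial i f U = deriv (\<lambda>t. f (U + t *\<^sub>R axis i 1)) 0"

end

theory Submission
  imports Defs
begin

theorem theorem3:
  fixes L :: "'l set" and \<mu> :: real and \<mu>l :: "'l \<Rightarrow> real"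
    and \<sigma> :: "'n::finite \<Rightarrow> 'l \<Rightarrow> real"
  assumes "finite L"
    and "\<mu> > 0"
    and "\<And>l. l \<in> L \<Longrightarrow> 0 < \<mu>l l \<and> \<mu>l l \<le> \<mu>"
    and "\<And>i l. l \<in> L \<Longrightarrow> \<sigma> i l \<ge> 0"
    and "\<And>i. (\<Sum>l\<in>L. \<sigma> i l) = 1"
  shows "\<forall>U::real^'n. (\<forall>j. U $ j < 0) \<longrightarrow> (\<forall>i.
           partial i (partial i (gnl_E L \<mu> \<mu>l \<sigma>)) U
             \<le> (1 / Min (\<mu>l ` L)) * partial i (gnl_E L \<mu> \<mu>l \<sigma>) U)"
proof (intro allI impI)
  fix U :: "real^'n" and i :: 'n
  note fin = assms(1) and mupos = assms(2) and mul = assms(3) and sig = assms(4)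
  have Lne: "L \<noteq> {}" using assms(5)[of i] by auto
  define m where "m = Min (\<mu>l ` L)"
  have mpos: "0 < m" unfolding m_def using fin Lne mul by (subst Min_gr_iff) auto
  have mle: "m \<le> \<mu>l l" if "l \<in> L" for l unfolding m_def using fin that by auto
  define Y where "Y = (\<lambda>l j t. (\<sigma> j l * exp (U$j + t * (if j = i then 1 else 0))) powr (1 / \<mu>l l))"
  define S where "S = (\<lambda>l t. \<Sum>j\<in>UNIV. Y l j t)"
  define P where "P = (\<lambda>l t. S l t powr (\<mu>l l / \<mu>))"
  define G where "G = (\<lambda>t. \<Sum>l\<in>L. P l t)"
  define Q where "Q = (\<lambda>l t. Y l i t / S l t)"
  define T where "T = (\<lambda>l t. P l t * Q l t / \<mu>)"
  define T' where "T' = (\<lambda>l t. P l t * Q l t * (Q l t / \<mu> + (1 - Q l t) / \<mu>l l) / \<mu>)"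
  define N where "N = (\<lambda>t. \<Sum>l\<in>L. T l t)"
  define N' where "N' = (\<lambda>t. \<Sum>l\<in>L. T' l t)"
  define D1 where "D1 = (\<lambda>t. \<mu> * N t / G t)"
  define D2 where "D2 = (\<lambda>t. \<mu> * (N' t * G t - N t * N t) / (G t)^2)"
  define h where "h = (\<lambda>t. gnl_E L \<mu> \<mu>l \<sigma> (U + t *\<^sub>R axis i 1))"
  have h_eq: "h t = \<mu> * ln (G t)" for t
    unfolding h_def gnl_E_def gnl_G_def G_def P_def S_def Y_def vexp_def
    by (simp add: axis_def)
  have Ynn: "Y l j t \<ge> 0" for l j t unfolding Y_def by simp
  have Snn: "S l t \<ge> 0" for l t unfolding S_def using Ynn by (simp add: sum_nonneg)
  have Pnn: "P l t \<ge> 0" for l t unfolding P_def by simp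
  have Y_der: "(Y l j has_real_derivative (if j = i then Y l j t / \<mu>l l else 0)) (at t)"
    if l: "l \<in> L" for l j t
  proof (cases "\<sigma> j l = 0")
    case True
    then show ?thesis unfolding Y_def by (cases "j = i") auto
  next
    case False
    with sig[OF l, of j] have sp: "\<sigma> j l > 0" by simp
    have eq: "Y l j = (\<lambda>t. \<sigma> j l powr (1 / \<mu>l l) * exp ((U$j + t * (if j = i then 1 else 0)) * (1 / \<mu>l l)))"
      unfolding Y_def using sp by (simp add: powr_mult exp_powr_real)
    show ?thesis
    proof (cases "j = i")
      case True
      show ?thesis unfolding eq using True mul[OF l]
        by (auto intro!: derivative_eq_intros)
    next
      case False
      show ?thesis unfolding eq using False by simp
    qed
  qed
  have S_der: "(S l has_real_derivative Y l i t / \<mu>l l) (at t)" if l: "l \<in> L" for l t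
  proof -
    have "((\<lambda>t. \<Sum>j\<in>UNIV. Y l j t) has_real_derivative
        (\<Sum>j\<in>UNIV. (if j = i then Y l j t / \<mu>l l else 0))) (at t)"
      by (rule DERIV_sum) (rule Y_der[OF l])
    then show ?thesis unfolding S_def by simp
  qed
  have S_cases: "(\<forall>t. S l t = 0 \<and> Y l i t = 0) \<or> (\<forall>t. S l t > 0)" if l: "l \<in> L" for l
  proof (cases "\<forall>j. \<sigma> j l = 0")
    case True
    then show ?thesis unfolding S_def Y_def by simp
  next
    case False
    then obtain j where "\<sigma> j l \<noteq> 0" by auto
    with sig[OF l, of j] have sp: "\<sigma> j l > 0" by simp
    have "S l t > 0" for t
    proof -
      have "Y l j t > 0" unfolding Y_def using sp by simp
      also have "Y l j t \<le> S l t" unfolding S_def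
        by (rule member_le_sum) (auto simp: Ynn)
      finally show ?thesis .
    qed
    then show ?thesis by blast
  qed
  have P_der: "(P l has_real_derivative T l t) (at t)" if l: "l \<in> L" for l t
    using S_cases[OF l]
  proof
    assume A: "\<forall>t. S l t = 0 \<and> Y l i t = 0"
    then have "P l = (\<lambda>t. 0)" unfolding P_def by auto
    moreover have "T l t = 0" unfolding T_def Q_def using A by simp
    ultimately show ?thesis by simp
  next
    assume A: "\<forall>t. S l t > 0"
    have "((\<lambda>t. S l t powr (\<mu>l l / \<mu>)) has_real_derivative
       S l t powr (\<mu>l l / \<mu>) * (0 * ln (S l t) + (Y l i t / \<mu>l l) * (\<mu>l l / \<mu>) / S l t)) (at t)"
      by (rule DERIV_powr[OF S_der[OF l]]) (use A in auto)
    moreover have "S l t powr (\<mu>l l / \<mu>) * (0 * ln (S l t) + (Y l i t / \<mu>l l) * (\<mu>l l / \<mu>) / S l t) = T l t"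
      unfolding T_def P_def Q_def using mul[OF l] mupos by simp
    ultimately show ?thesis unfolding P_def by simp
  qed
  have G_der: "(G has_real_derivative N t) (at t)" for t
    unfolding G_def N_def by (rule DERIV_sum) (rule P_der)
  have Gpos: "G t > 0" for t
  proof -
    obtain l where l: "l \<in> L" and "\<sigma> i l \<noteq> 0"
      using assms(5)[of i] by (metis sum.neutral zero_neq_one)
    with sig[OF l, of i] have sp: "\<sigma> i l > 0" by simp
    have Yp: "Y l i t > 0" unfolding Y_def using sp by simp
    have "S l t > 0" using S_cases[OF l] Yp by auto
    then have "P l t > 0" unfolding P_def by simp
    also have "P l t \<le> G t" unfolding G_def
      by (rule member_le_sum) (use l fin Pnn in auto)
    finally show ?thesis .
  qed
  have h_der: "(h has_real_derivative D1 t) (at t)" for t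
  proof -
    have hh: "h = (\<lambda>t. \<mu> * ln (G t))" using h_eq by auto
    have "((\<lambda>t. \<mu> * ln (G t)) has_real_derivative \<mu> * (inverse (G t) * N t)) (at t)"
      by (rule DERIV_cmult, rule DERIV_chain2[OF DERIV_ln[OF Gpos] G_der])
    then show ?thesis unfolding hh D1_def by (simp add: divide_inverse mult_ac)
  qed
  have T_der: "(T l has_real_derivative T' l t) (at t)" if l: "l \<in> L" for l t
    using S_cases[OF l]
  proof
    assume A: "\<forall>t. S l t = 0 \<and> Y l i t = 0"
    then have "T l = (\<lambda>t. 0)" unfolding T_def Q_def by auto
    moreover have "T' l t = 0" unfolding T'_def Q_def using A by simp
    ultimately show ?thesis by simp
  next
    assume A: "\<forall>t. S l t > 0"
    have Sne: "S l t \<noteq> 0" using A by (metis less_irrefl)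
    have Yd: "(Y l i has_real_derivative Y l i t / \<mu>l l) (at t)" using Y_der[OF l, of i t] by simp
    have "((\<lambda>t. P l t * (Y l i t / S l t) / \<mu>) has_real_derivative
       (T l t * (Y l i t / S l t) + ((Y l i t / \<mu>l l) * S l t - Y l i t * (Y l i t / \<mu>l l)) / (S l t * S l t) * P l t) / \<mu>) (at t)"
      by (rule DERIV_cdivide, rule DERIV_mult[OF P_der[OF l]], rule DERIV_divide[OF Yd S_der[OF l] Sne])
    moreover have "(T l t * (Y l i t / S l t) + ((Y l i t / \<mu>l l) * S l t - Y l i t * (Y l i t / \<mu>l l)) / (S l t * S l t) * P l t) / \<mu> = T' l t"
      unfolding T_def T'_def Q_def using Sne mul[OF l] mupos by (simp add: field_simps)
    moreover have "T l = (\<lambda>t. P l t * (Y l i t / S l t) / \<mu>)" unfolding T_def Q_def by simp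
    ultimately show ?thesis by simp
  qed
  have N_der: "(N has_real_derivative N' t) (at t)" for t
    unfolding N_def N'_def by (rule DERIV_sum) (rule T_der)
  have D1_der: "(D1 has_real_derivative D2 t) (at t)" for t
  proof -
    have "((\<lambda>t. \<mu> * (N t / G t)) has_real_derivative \<mu> * ((N' t * G t - N t * N t) / (G t * G t))) (at t)"
      by (rule DERIV_cmult, rule DERIV_divide[OF N_der G_der]) (use Gpos[of t] in simp)
    then show ?thesis unfolding D1_def D2_def by (simp add: power2_eq_square)
  qed
  have p1: "partial i (gnl_E L \<mu> \<mu>l \<sigma>) (U + s *\<^sub>R axis i 1) = D1 s" for s
  proof -
    have e: "(\<lambda>t. gnl_E L \<mu> \<mu>l \<sigma> (U + s *\<^sub>R axis i 1 + t *\<^sub>R axis i 1)) = (\<lambda>t. h (t + s))"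
      unfolding h_def by (simp add: algebra_simps scaleR_add_left)
    have "(h has_real_derivative D1 s) (at (0 + s))" using h_der by simp
    then have "((\<lambda>t. h (t + s)) has_real_derivative D1 s) (at 0)" by (simp only: DERIV_shift)
    then show ?thesis unfolding partial_def e by (rule DERIV_imp_deriv)
  qed
  have p0: "partial i (gnl_E L \<mu> \<mu>l \<sigma>) U = D1 0" using p1[of 0] by simp
  have p2: "partial i (partial i (gnl_E L \<mu> \<mu>l \<sigma>)) U = D2 0"
  proof -
    have "(\<lambda>t. partial i (gnl_E L \<mu> \<mu>l \<sigma>) (U + t *\<^sub>R axis i 1)) = D1" using p1 by auto
    then show ?thesis unfolding partial_def[of i "partial i (gnl_E L \<mu> \<mu>l \<sigma>)"]
      using DERIV_imp_deriv[OF D1_der] by simp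
  qed
  have Tb: "T' l 0 \<le> T l 0 / m" if l: "l \<in> L" for l
  proof -
    have Qnn: "Q l 0 \<ge> 0" unfolding Q_def using Ynn Snn by simp
    have PQ: "P l 0 * Q l 0 / \<mu> \<ge> 0" using Qnn Pnn mupos by simp
    have "Q l 0 / \<mu> \<le> Q l 0 / \<mu>l l" using Qnn mul[OF l] by (simp add: divide_left_mono)
    then have "Q l 0 / \<mu> + (1 - Q l 0) / \<mu>l l \<le> 1 / \<mu>l l" by (simp add: diff_divide_distrib)
    also have "\<dots> \<le> 1 / m" using mle[OF l] mpos by (simp add: frac_le)
    finally have "P l 0 * Q l 0 / \<mu> * (Q l 0 / \<mu> + (1 - Q l 0) / \<mu>l l) \<le> P l 0 * Q l 0 / \<mu> * (1 / m)"
      using PQ by (rule mult_left_mono)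
    then show ?thesis unfolding T'_def T_def by (simp add: field_simps)
  qed
  have Nb: "N' 0 \<le> N 0 / m" unfolding N'_def N_def
    using Tb by (simp add: sum_divide_distrib sum_mono)
  have "D2 0 \<le> \<mu> * (N' 0 * G 0) / (G 0)^2" unfolding D2_def
    using mupos Gpos[of 0] by (intro divide_right_mono mult_left_mono) auto
  also have "\<dots> = \<mu> * N' 0 / G 0" using Gpos[of 0] by (simp add: power2_eq_square)
  also have "\<dots> \<le> \<mu> * (N 0 / m) / G 0" using mupos Gpos[of 0] Nb
    by (intro divide_right_mono mult_left_mono) auto
  also have "\<dots> = (1 / m) * D1 0" unfolding D1_def by simp
  finally show "partial i (partial i (gnl_E L \<mu> \<mu>l \<sigma>)) U
             \<le> (1 / Min (\<mu>l ` L)) * partial i (gnl_E L \<mu> \<mu>l \<sigma>) U"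
    unfolding p0 p2 m_def .
qed

end
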